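(* Let $v\ne 7$ with $v\equiv 1\pmod 6$ or $v\equiv 9\pmod{18}$. Then every cyclic $\mathrm{STS}(v)$ admits a zero-sum $3$-flow.
   Context: A Steiner triple system $\mathrm{STS}(v)$ is a pair $(X,\mathcal{B})$ with $|X|=v$ and $\mathcal{B}$ a collection of 3-subsets of $X$ such that every 2-subset lies in exactly one block. It is cyclic if, after relabeling, $X=\mathbb{Z}_v$ and $i\mapsto i+1\pmod v$ maps blocks to blocks. For a design $(X,\mathcal{B})$ and integer $n\ge2$, a zero-sum $n$-flow is a map $f:\mathcal{B}\to\{\pm1,\ldots,\pm(n-1)\}$ such that $\sum_{B\ni x} f(B)=0$ for every point $x$; thus a zero-sum 3-flow takes values in $\{\pm1,\pm2\}$. *)

theory Defs
  imports Main
begin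

definition STS :: "'a set \<Rightarrow> 'a set set \<Rightarrow> bool" where
  "STS X Bs \<longleftrightarrow> finite X \<and>
     (\<forall>B\<in>Bs. B \<subseteq> X \<and> card B = 3) \<and>
     (\<forall>x\<in>X. \<forall>y\<in>X. x \<noteq> y \<longrightarrow> (\<exists>!B. B \<in> Bs \<and> {x, y} \<subseteq> B))"

definition cyclic_design :: "'a set \<Rightarrow> 'a set set \<Rightarrow> bool" where
  "cyclic_design X Bs \<longleftrightarrow>
     (\<exists>\<phi> :: 'a \<Rightarrow> nat. bij_betw \<phi> X {0..<card X} \<and>
        (\<forall>B\<in>Bs. (\<lambda>i. (i + 1) mod card X) ` (\<phi> ` B) \<in> (\<lambda>C. \<phi> ` C) ` Bs))"

definition zero_sum_flow :: "nat \<Rightarrow> 'a set \<Rightarrow> 'a set set \<Rightarrow> ('a set \<Rightarrow> int) \<Rightarrow> bool" where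
  "zero_sum_flow n X Bs f \<longleftrightarrow>
     (\<forall>B\<in>Bs. f B \<noteq> 0 \<and> \<bar>f B\<bar> \<le> int n - 1) \<and>
     (\<forall>x\<in>X. (\<Sum>B\<in>{B\<in>Bs. x \<in> B}. f B) = 0)"

end

theory Submission
  imports Defs
begin


definition sh :: "nat \<Rightarrow> nat \<Rightarrow> nat set \<Rightarrow> nat set" where
  "sh v k C = (\<lambda>i. (i + k) mod v) ` C"

lemma sh_add: "sh v a (sh v b C) = sh v (b + a) C"
  unfolding sh_def image_image by (simp add: mod_add_left_eq add.assoc)

lemma sh_mod: "sh v (k mod v) C = sh v k C"
  unfolding sh_def by (simp add: mod_add_right_eq)

lemma sh_0: "C \<subseteq> {..<v} \<Longrightarrow> sh v 0 C = C"
  unfolding sh_def by (force simp: subset_iff image_iff)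

lemma sh_v: "C \<subseteq> {..<v} \<Longrightarrow> sh v v C = C"
  by (metis sh_0 sh_mod mod_self)

lemma sh_sub: "0 < v \<Longrightarrow> sh v k C \<subseteq> {..<v}"
  unfolding sh_def by auto

lemma mod_lt2: "(a::nat) < 2*v \<Longrightarrow> a mod v = (if a < v then a else a - v)"
  by (simp add: le_mod_geq)

lemma add_n_ne: assumes "(c::nat) < v" "0 < n" "n < v" shows "(c + n) mod v \<noteq> c"
proof -
  have "(c + n) mod v = (if c + n < v then c+n else c+n-v)" by (rule mod_lt2) (use assms in simp)
  then show ?thesis using assms by auto
qed

lemma modcanc: assumes "(a1::nat) + b1 = a2 + b2" "a1 mod 3 = a2 mod 3" shows "b1 mod 3 = b2 mod 3"
proof -
  have "int a1 + int b1 = int a2 + int b2" using assms(1) by simp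
  then have "int b1 - int b2 = int a2 - int a1" by simp
  moreover have "(3::int) dvd (int a2 - int a1)" using assms(2)
    by (metis mod_eq_dvd_iff of_nat_mod of_nat_numeral)
  ultimately have "(3::int) dvd (int b1 - int b2)" by simp
  then have "int b1 mod 3 = int b2 mod 3" by (simp add: mod_eq_dvd_iff)
  then show ?thesis by (metis of_nat_eq_iff of_nat_mod of_nat_numeral)
qed

lemma inj_shift: "inj_on (\<lambda>i::nat. (i + k) mod v) {..<v}"
proof (rule inj_onI)
  fix i j assume i: "i \<in> {..<v}" and j: "j \<in> {..<v}" and e: "(i + k) mod v = (j + k) mod v"
  have v: "v > 0" using i by auto
  have "(i + k mod v) mod v = (j + k mod v) mod v" using e by (simp add: mod_add_right_eq)
  moreover have "k mod v < v" using v by simp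
  ultimately show "i = j" using i j
    by (simp add: mod_lt2[of "i + k mod v" v] mod_lt2[of "j + k mod v" v] split: if_splits)
qed

lemma mem_sh_iff:
  assumes "x < (v::nat)" "c < v" "k < v"
  shows "((c + k) mod v = x) \<longleftrightarrow> (k = (x + v - c) mod v)"
  using assms by (simp add: mod_lt2[of "c+k" v] mod_lt2[of "x+v-c" v] split: if_splits) linarith

lemma card_sh: "C \<subseteq> {..<v} \<Longrightarrow> card (sh v k C) = card C"
  unfolding sh_def using card_image inj_on_subset[OF inj_shift] by blast

lemma sh_comm: "sh v a (sh v b C) = sh v b (sh v a C)"
  by (simp add: sh_add add.commute)

lemma sh_inv: "C \<subseteq> {..<v} \<Longrightarrow> k \<le> v \<Longrightarrow> sh v (v - k) (sh v k C) = C"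
  by (simp add: sh_add sh_v)

definition orb :: "nat \<Rightarrow> nat set \<Rightarrow> nat set set" where
  "orb v C = range (\<lambda>k. sh v k C)"

lemma orb_eq: "orb v C = (\<lambda>k. sh v k C) ` {..<v}" if "0 < v"
proof
  show "orb v C \<subseteq> (\<lambda>k. sh v k C) ` {..<v}"
    unfolding orb_def using that by (auto simp: image_iff intro!: bexI[of _ "_ mod v"] simp: sh_mod)
qed (auto simp: orb_def)

lemma orb_self: "C \<subseteq> {..<v} \<Longrightarrow> C \<in> orb v C"
  unfolding orb_def by (metis rangeI sh_0)

lemma orb_mem: assumes "C \<subseteq> {..<v}" "E \<in> orb v C" "0 < v" shows "orb v E = orb v C"
proof -
  obtain k where k: "E = sh v k C" using assms(2) by (auto simp: orb_def)
  have "orb v E \<subseteq> orb v C" unfolding orb_def k by (auto simp: sh_add)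
  moreover have "C = sh v (v - k mod v) E"
  proof -
    have "E = sh v (k mod v) C" using k sh_mod by metis
    moreover have "k mod v \<le> v" using assms(3) by simp
    ultimately show ?thesis using sh_inv[OF assms(1)] by metis
  qed
  then have "orb v C \<subseteq> orb v E" unfolding orb_def by (auto simp: sh_add)
  ultimately show ?thesis by auto
qed

lemma weights0:
  fixes Os :: "'b set"
  shows "finite Os \<Longrightarrow> card Os \<noteq> 1 \<Longrightarrow>
   \<exists>w::'b \<Rightarrow> int. (\<forall>Q\<in>Os. w Q \<in> {-2,-1,1,2}) \<and> (\<Sum>Q\<in>Os. w Q) = 0"
proof (induction "card Os" arbitrary: Os rule: less_induct)
  case less
  show ?case
  proof (cases "card Os = 0")
    case True
    then have "Os = {}" using less.prems by auto
    then show ?thesis by auto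
  next
    case c0: False
    show ?thesis
    proof (cases "card Os = 3")
      case True
      then obtain a b c where Os: "Os = {a,b,c}" "a \<noteq> b" "b \<noteq> c" "a \<noteq> c"
        by (auto simp: card_3_iff)
      let ?w = "(\<lambda>_. 0::int)(a := 1, b := 1, c := -2)"
      show ?thesis by (rule exI[of _ ?w]) (use Os in auto)
    next
      case c3: False
      have ge2: "card Os \<ge> 2" using c0 less.prems(2) by linarith
      then obtain a where a: "a \<in> Os" by fastforce
      have "card (Os - {a}) \<ge> 1" using ge2 a less.prems(1) by auto
      then obtain b where b: "b \<in> Os - {a}" by (metis all_not_in_conv card.empty not_one_le_zero)
      let ?Os' = "Os - {a} - {b}"
      have cO': "card ?Os' = card Os - 2" using a b less.prems(1) by auto
      have "card ?Os' < card Os" "card ?Os' \<noteq> 1" using cO' ge2 c3 by auto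
      with less.hyps[of ?Os'] less.prems(1) obtain w :: "'b \<Rightarrow> int" where
        w: "\<forall>Q\<in>?Os'. w Q \<in> {-2,-1,1,2}" "(\<Sum>Q\<in>?Os'. w Q) = 0" by auto
      let ?w = "w(a := 1, b := -1)"
      have ab: "a \<noteq> b" using b by auto
      have s1: "(\<Sum>Q\<in>Os. ?w Q) = ?w a + (\<Sum>Q\<in>Os - {a}. ?w Q)"
        using a less.prems(1) by (simp add: sum.remove)
      have s2: "(\<Sum>Q\<in>Os - {a}. ?w Q) = ?w b + (\<Sum>Q\<in>?Os'. ?w Q)"
        using b less.prems(1) by (simp add: sum.remove)
      have s3: "(\<Sum>Q\<in>?Os'. ?w Q) = (\<Sum>Q\<in>?Os'. w Q)"
        by (rule sum.cong) auto
      show ?thesis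
        by (rule exI[of _ ?w]) (use w s1 s2 s3 ab in auto)
    qed
  qed
qed

lemma weights:
  "finite Os \<Longrightarrow>
   \<exists>w::'b \<Rightarrow> int. (\<forall>Q\<in>Os. w Q \<in> {-2,-1,1,2}) \<and> (\<Sum>Q\<in>Os. w Q) = (if card Os = 1 then 1 else 0)"
proof (cases "card Os = 1")
  case True
  then obtain a where "Os = {a}" by (auto simp: card_1_singleton_iff)
  then show ?thesis by (intro exI[of _ "\<lambda>_. 1"]) auto
next
  case False
  assume "finite Os"
  then show ?thesis using weights0[of Os] False by auto
qed


locale zsts =
  fixes v :: nat and D :: "nat set set"
  assumes vpos: "0 < v"
  and blk: "C \<in> D \<Longrightarrow> C \<subseteq> {..<v} \<and> card C = 3"
  and pair: "x < v \<Longrightarrow> y < v \<Longrightarrow> x \<noteq> y \<Longrightarrow> \<exists>!C. C \<in> D \<and> {x,y} \<subseteq> C"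
  and cyc: "C \<in> D \<Longrightarrow> sh v 1 C \<in> D"
begin

lemma pair_uniq:
  assumes "x < v" "y < v" "x \<noteq> y" "C1 \<in> D" "C2 \<in> D" "{x,y} \<subseteq> C1" "{x,y} \<subseteq> C2"
  shows "C1 = C2"
  using pair[OF assms(1-3)] assms(4-7) by blast

lemma finD: "finite D"
proof -
  have "D \<subseteq> Pow {..<v}" using blk by auto
  then show ?thesis by (rule finite_subset) auto
qed

lemma cyck: "C \<in> D \<Longrightarrow> sh v k C \<in> D"
proof (induction k)
  case 0 then show ?case using blk sh_0 by metis
next
  case (Suc k) then show ?case using cyc[of "sh v k C"] sh_add[of v 1 k C] by simp
qed

lemma orb_sub: "C \<in> D \<Longrightarrow> orb v C \<subseteq> D"
  unfolding orb_def using cyck by auto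

definition full where "full C \<longleftrightarrow> (\<forall>k. 0 < k \<and> k < v \<longrightarrow> sh v k C \<noteq> C)"

lemma sh_sum: assumes "C \<subseteq> {..<v}" shows "(\<Sum>y\<in>sh v k C. y) = (\<Sum>c\<in>C. (c + k) mod v)"
  unfolding sh_def by (rule sum.reindex_cong[OF inj_on_subset[OF inj_shift assms]]) auto

lemma stab: assumes "C \<in> D" "sh v k C = C" shows "v dvd 3 * k"
proof -
  have C: "C \<subseteq> {..<v}" "card C = 3" "finite C" using blk[OF assms(1)] by (auto intro: finite_subset)
  have "(\<Sum>c\<in>C. c) mod v = (\<Sum>c\<in>C. (c + k) mod v) mod v"
    using sh_sum[OF C(1), of k] assms(2) by simp
  also have "\<dots> = (\<Sum>c\<in>C. (c + k)) mod v" by (simp add: mod_sum_eq)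
  also have "(\<Sum>c\<in>C. (c + k)) = (\<Sum>c\<in>C. c) + 3 * k" using C by (simp add: sum.distrib)
  finally have "((\<Sum>c\<in>C. c) + 3 * k) mod v = (\<Sum>c\<in>C. c) mod v" by simp
  then show ?thesis by (simp add: mod_eq_dvd_iff_nat)
qed

lemma full_orb: assumes "C \<in> D" "full C" "E \<in> orb v C" shows "full E"
  unfolding full_def
proof (intro allI impI)
  fix k assume k: "0 < k \<and> k < v"
  obtain j where j: "E = sh v j C" using assms(3) by (auto simp: orb_def)
  show "sh v k E \<noteq> E"
  proof
    assume "sh v k E = E"
    then have "sh v (v - j mod v) (sh v k E) = sh v (v - j mod v) E" by simp
    moreover have "sh v (v - j mod v) E = C"
    proof -
      have "E = sh v (j mod v) C" using j sh_mod by metis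
      moreover have "j mod v \<le> v" using vpos by simp
      ultimately show ?thesis using sh_inv blk[OF assms(1)] by metis
    qed
    ultimately have "sh v k C = C" by (metis sh_comm)
    then show False using assms(2) k unfolding full_def by auto
  qed
qed

lemma inj_orb: assumes "C \<in> D" "full C" shows "inj_on (\<lambda>k. sh v k C) {..<v}"
proof -
  have C: "C \<subseteq> {..<v}" using blk[OF assms(1)] by auto
  have *: "sh v (j - i) C = C" if "sh v i C = sh v j C" "i < j" "j < v" for i j
  proof -
    have "C = sh v (v - i) (sh v i C)" using sh_inv[OF C, of i] that by simp
    also have "\<dots> = sh v (v - i) (sh v j C)" using that by simp
    also have "\<dots> = sh v (v + (j - i)) C" using that by (simp add: sh_add add.commute)
    also have "\<dots> = sh v (j - i) C" by (metis sh_mod mod_add_self1)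
    finally show ?thesis by simp
  qed
  show ?thesis
  proof (rule inj_onI)
    fix i j assume i: "i \<in> {..<v}" and j: "j \<in> {..<v}" and e: "sh v i C = sh v j C"
    show "i = j"
    proof (rule ccontr)
      assume "i \<noteq> j"
      then consider "i < j" | "j < i" by linarith
      then show False
      proof cases
        case 1 then show False using *[OF e 1] i j assms(2) unfolding full_def by auto
      next
        case 2 then show False using *[OF e[symmetric] 2] i j assms(2) unfolding full_def by auto
      qed
    qed
  qed
qed

lemma count:
  assumes "C \<in> D" "full C" "x < v"
  shows "sum F {E\<in>orb v C. x \<in> E} = (\<Sum>b\<in>C. F (sh v ((x + v - b) mod v) C))"
proof -
  have C: "C \<subseteq> {..<v}" using blk[OF assms(1)] by auto
  let ?g = "\<lambda>b. (x + v - b) mod v"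
  have K: "{k\<in>{..<v}. x \<in> sh v k C} = ?g ` C"
  proof (intro set_eqI iffI)
    fix k assume "k \<in> {k\<in>{..<v}. x \<in> sh v k C}"
    then obtain c where c: "c \<in> C" "(c + k) mod v = x" "k < v" unfolding sh_def by auto
    then have "k = ?g c" using mem_sh_iff[OF assms(3), of c k] C by auto
    then show "k \<in> ?g ` C" using c by auto
  next
    fix k assume "k \<in> ?g ` C"
    then obtain c where c: "c \<in> C" "k = ?g c" by auto
    have kv: "k < v" using c vpos by simp
    then have "(c + k) mod v = x" using mem_sh_iff[OF assms(3), of c k] C c by auto
    then show "k \<in> {k\<in>{..<v}. x \<in> sh v k C}" using c kv unfolding sh_def by (auto intro!: image_eqI[of _ _ c])
  qed
  have injg: "inj_on ?g C"
  proof (rule inj_onI)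
    fix b1 b2 assume b: "b1 \<in> C" "b2 \<in> C" and e: "?g b1 = ?g b2"
    have kv: "?g b1 < v" using vpos by simp
    have "(b1 + ?g b1) mod v = x" using mem_sh_iff[OF assms(3), of b1 "?g b1"] C b kv by auto
    moreover have "(b2 + ?g b1) mod v = x" using mem_sh_iff[OF assms(3), of b2 "?g b1"] C b kv e by auto
    moreover have "b1 < v" "b2 < v" using b C by auto
    ultimately show "b1 = b2" using inj_shift[of "?g b1" v] unfolding inj_on_def by (metis lessThan_iff)
  qed
  have E: "{E\<in>orb v C. x \<in> E} = (\<lambda>k. sh v k C) ` {k\<in>{..<v}. x \<in> sh v k C}"
    using orb_eq[OF vpos, of C] by auto
  have "sum F {E\<in>orb v C. x \<in> E} = sum (\<lambda>k. F (sh v k C)) {k\<in>{..<v}. x \<in> sh v k C}"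
    unfolding E by (rule sum.reindex[OF inj_on_subset[OF inj_orb[OF assms(1,2)]], unfolded comp_def]) auto
  also have "\<dots> = (\<Sum>b\<in>C. F (sh v (?g b) C))"
    unfolding K by (rule sum.reindex[OF injg, unfolded comp_def])
  finally show ?thesis .
qed

lemma count_const:
  fixes c :: int
  assumes "C \<in> D" "full C" "x < v" "\<And>E. E \<in> orb v C \<Longrightarrow> F E = c"
  shows "sum F {E\<in>orb v C. x \<in> E} = 3 * c"
proof -
  have "sum F {E\<in>orb v C. x \<in> E} = (\<Sum>b\<in>C. F (sh v ((x + v - b) mod v) C))"
    by (rule count[OF assms(1-3)])
  also have "\<dots> = (\<Sum>b\<in>C. c)" using assms(4) by (intro sum.cong) (auto simp: orb_def)
  also have "\<dots> = 3 * c" using blk[OF assms(1)] by simp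
  finally show ?thesis .
qed

lemma orbits_sum:
  fixes w :: "nat set set \<Rightarrow> int"
  assumes R: "R \<subseteq> D" "\<And>C. C \<in> R \<Longrightarrow> orb v C \<subseteq> R" "\<And>C. C \<in> R \<Longrightarrow> full C"
    and x: "x < v"
  shows "(\<Sum>C\<in>{C\<in>R. x \<in> C}. w (orb v C)) = 3 * (\<Sum>Q\<in>orb v ` R. w Q)"
proof -
  let ?A = "\<lambda>Q. {E\<in>Q. x \<in> E}"
  have fR: "finite R" using R(1) finD finite_subset by auto
  have U: "{C\<in>R. x \<in> C} = \<Union>(?A ` (orb v ` R))"
  proof (intro set_eqI iffI)
    fix C assume "C \<in> {C\<in>R. x \<in> C}"
    then show "C \<in> \<Union>(?A ` (orb v ` R))"
      using orb_self[of C v] blk R(1) by blast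
  next
    fix C assume "C \<in> \<Union>(?A ` (orb v ` R))"
    then show "C \<in> {C\<in>R. x \<in> C}" using R(2) by blast
  qed
  have "(\<Sum>C\<in>{C\<in>R. x \<in> C}. w (orb v C)) = (\<Sum>Q\<in>orb v ` R. \<Sum>E\<in>?A Q. w (orb v E))"
    unfolding U
  proof (rule sum.UNION_disjoint)
    show "finite (orb v ` R)" using fR by simp
    show "\<forall>Q\<in>orb v ` R. finite (?A Q)" using R(1,2) finD finite_subset
      by (metis (no_types, lifting) image_iff mem_Collect_eq subset_eq finite_Collect_conjI)
    show "\<forall>Q1\<in>orb v ` R. \<forall>Q2\<in>orb v ` R. Q1 \<noteq> Q2 \<longrightarrow> ?A Q1 \<inter> ?A Q2 = {}"
    proof (intro ballI impI)
      fix Q1 Q2 assume Q: "Q1 \<in> orb v ` R" "Q2 \<in> orb v ` R" "Q1 \<noteq> Q2"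
      then obtain C1 C2 where C: "C1 \<in> R" "C2 \<in> R" "Q1 = orb v C1" "Q2 = orb v C2" by auto
      show "?A Q1 \<inter> ?A Q2 = {}"
      proof (rule ccontr)
        assume "?A Q1 \<inter> ?A Q2 \<noteq> {}"
        then obtain E where "E \<in> orb v C1" "E \<in> orb v C2" using C by auto
        then have "orb v C1 = orb v C2" using orb_mem[OF _ _ vpos] blk R(1) C by (metis subsetD)
        then show False using Q C by simp
      qed
    qed
  qed
  also have "\<dots> = (\<Sum>Q\<in>orb v ` R. 3 * w Q)"
  proof (rule sum.cong[OF refl])
    fix Q assume "Q \<in> orb v ` R"
    then obtain C where C: "C \<in> R" "Q = orb v C" by auto
    have CD: "C \<in> D" using C R(1) by auto
    show "(\<Sum>E\<in>?A Q. w (orb v E)) = 3 * w Q" unfolding C(2)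
      by (rule count_const[OF CD R(3)[OF C(1)] x]) (use orb_mem[OF _ _ vpos] blk[OF CD] in auto)
  qed
  also have "\<dots> = 3 * (\<Sum>Q\<in>orb v ` R. w Q)" by (simp add: sum_distrib_left)
  finally show ?thesis .
qed

lemma case1:
  assumes v6: "v mod 6 = 1" and v7: "v \<noteq> 7"
  shows "\<exists>f. (\<forall>C\<in>D. f C \<in> {-2,-1,1,2::int}) \<and> (\<forall>x<v. (\<Sum>C\<in>{C\<in>D. x \<in> C}. f C) = 0)"
proof -
  have allfull: "full C" if C: "C \<in> D" for C
    unfolding full_def
  proof (intro allI impI notI)
    fix k assume k: "0 < k \<and> k < v" and e: "sh v k C = C"
    obtain q where q: "3 * k = v * q" using stab[OF C e] by (auto elim: dvdE)
    have "v * q < v * 3" using q k by linarith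
    then have "q < 3" by simp
    moreover have "q > 0" using q k by (metis mult_0_right gr0I mult_is_0 zero_neq_numeral)
    ultimately have "q = 1 \<or> q = 2" by linarith
    then show False using q v6 by (auto; presburger)
  qed
  let ?O = "orb v ` D"
  have fO: "finite ?O" using finD by simp
  obtain w :: "nat set set \<Rightarrow> int" where w: "\<forall>Q\<in>?O. w Q \<in> {-2,-1,1,2}"
    "(\<Sum>Q\<in>?O. w Q) = (if card ?O = 1 then 1 else 0)" using weights[OF fO] by blast
  have c1: "card ?O \<noteq> 1"
  proof
    assume c: "card ?O = 1"
    then obtain Q where Q: "?O = {Q}" by (auto simp: card_1_singleton_iff)
    have "D \<noteq> {}" using Q by auto
    then obtain C where C: "C \<in> D" by auto
    have v3: "3 \<le> v"
    proof -
      have "card C \<le> card {..<v}" using blk[OF C] by (intro card_mono) auto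
      then show ?thesis using blk[OF C] by simp
    qed
    then have v13: "v \<ge> 13" using v6 v7 by presburger
    obtain C0 where C0: "C0 \<in> D" "{0,1} \<subseteq> C0" using pair[of 0 1] v3 by auto
    have inO: "E \<in> orb v C0" if "E \<in> D" for E
    proof -
      have "orb v E \<in> {Q}" "orb v C0 \<in> {Q}" using Q that C0 by (metis imageI)+
      then have "orb v E = orb v C0" by simp
      then show ?thesis using orb_self[of E v] blk[OF that] by auto
    qed
    let ?T = "{E\<in>orb v C0. 0 \<in> E}"
    have "sum (\<lambda>_. 1::int) ?T = 3 * 1"
      by (rule count_const[OF C0(1) allfull[OF C0(1)] vpos]) auto
    then have cT: "card ?T = 3" by simp
    have sub: "{1..<v} \<subseteq> \<Union>?T"
    proof
      fix y assume y: "y \<in> {1..<v}"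
      then obtain E where E: "E \<in> D" "{0,y} \<subseteq> E" using pair[of 0 y] by auto
      then show "y \<in> \<Union>?T" using inO[OF E(1)] by auto
    qed
    have "card (\<Union>?T) \<le> sum card ?T" by (rule card_Union_le_sum_card)
    also have "sum card ?T = sum (\<lambda>_. 3) ?T"
      using orb_sub[OF C0(1)] blk by (intro sum.cong) auto
    also have "\<dots> = 9" using cT by simp
    finally have "card (\<Union>?T) \<le> 9" .
    moreover have "card {1..<v} \<le> card (\<Union>?T)"
    proof (rule card_mono[OF _ sub])
      have "\<Union>?T \<subseteq> {..<v}" using orb_sub[OF C0(1)] blk by blast
      then show "finite (\<Union>?T)" using finite_subset by blast
    qed
    ultimately show False using v13 by simp
  qed
  let ?f = "\<lambda>C. w (orb v C)"
  show ?thesis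
  proof (intro exI[of _ ?f] conjI ballI allI impI)
    fix C assume "C \<in> D" then show "?f C \<in> {-2,-1,1,2}" using w(1) by auto
  next
    fix x assume x: "x < v"
    have "(\<Sum>C\<in>{C\<in>D. x \<in> C}. ?f C) = 3 * (\<Sum>Q\<in>?O. w Q)"
      by (rule orbits_sum[OF subset_refl orb_sub allfull x])
    then show "(\<Sum>C\<in>{C\<in>D. x \<in> C}. ?f C) = 0" using w(2) c1 by simp
  qed
qed

lemma full_iff3:
  assumes vn: "v = 3 * n" and C: "C \<in> D"
  shows "full C \<longleftrightarrow> sh v n C \<noteq> C"
proof
  assume "full C" then show "sh v n C \<noteq> C" using vn vpos unfolding full_def by auto
next
  assume ne: "sh v n C \<noteq> C"
  show "full C" unfolding full_def
  proof (intro allI impI notI)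
    fix k assume k: "0 < k \<and> k < v" and e: "sh v k C = C"
    obtain q where q: "3 * k = v * q" using stab[OF C e] by (auto elim: dvdE)
    have "v * q < v * 3" using q k by linarith
    then have "q < 3" by simp
    moreover have "q > 0" using q k by (metis mult_0_right gr0I mult_is_0 zero_neq_numeral)
    ultimately have "q = 1 \<or> q = 2" by linarith
    then show False
    proof
      assume "q = 1" then have "k = n" using q vn by simp
      then show False using e ne by simp
    next
      assume "q = 2" then have kn: "k = 2 * n" using q vn by simp
      have "sh v n C = sh v (4 * n) C" using sh_mod[of v "4*n" C] vn by simp
      also have "\<dots> = sh v k (sh v k C)" using kn by (simp add: sh_add)
      also have "\<dots> = C" using e by simp
      finally show False using ne by simp
    qed
  qed
qed

lemma card_res:
  assumes "r < 3" shows "card {x. x < 3 * n \<and> x mod 3 = r} = n"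
proof -
  have "{x. x < 3 * n \<and> x mod 3 = r} = (\<lambda>i. 3 * i + r) ` {..<n}"
  proof (intro set_eqI iffI)
    fix x assume "x \<in> {x. x < 3 * n \<and> x mod 3 = r}"
    then have "x = 3 * (x div 3) + r" "x div 3 < n" by auto
    then show "x \<in> (\<lambda>i. 3 * i + r) ` {..<n}" by blast
  next
    fix x assume "x \<in> (\<lambda>i. 3 * i + r) ` {..<n}"
    then show "x \<in> {x. x < 3 * n \<and> x mod 3 = r}" using assms by auto
  qed
  moreover have "inj_on (\<lambda>i. 3 * i + r) {..<n}" by (auto simp: inj_on_def)
  ultimately show ?thesis by (simp add: card_image)
qed

lemma small_even:
  fixes a b c :: nat
  assumes "a + b + c = 3" "a \<ge> 2 \<or> b \<ge> 2 \<or> c \<ge> 2"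
  shows "even (a * b)"
proof -
  have "a = 0 \<or> a = 1 \<or> a = 2 \<or> a = 3" "b = 0 \<or> b = 1 \<or> b = 2 \<or> b = 3" using assms(1) by auto
  then show ?thesis using assms by auto
qed

lemma exists_rainbow:
  assumes vn: "v = 3 * n" and odd: "odd n"
  shows "\<exists>B\<in>D. inj_on (\<lambda>b. b mod 3) B"
proof (rule ccontr)
  assume no: "\<not> (\<exists>B\<in>D. inj_on (\<lambda>b. b mod 3) B)"
  define R where "R r = {x. x < v \<and> x mod (3::nat) = r}" for r
  let ?P = "R 0 \<times> R 1"
  have cP: "card ?P = n * n" using card_res[of 0 n] card_res[of 1 n] vn unfolding R_def by (simp add: card_cartesian_product)
  let ?A = "\<lambda>C. (C \<inter> R 0) \<times> (C \<inter> R 1)"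
  have U: "?P = \<Union>(?A ` D)"
  proof (intro set_eqI iffI)
    fix p assume p: "p \<in> ?P"
    obtain x y where xy: "p = (x, y)" by fastforce
    have "x < v" "y < v" "x \<noteq> y" using p xy unfolding R_def by auto
    then obtain C where "C \<in> D" "{x,y} \<subseteq> C" using pair by blast
    then show "p \<in> \<Union>(?A ` D)" using p xy by auto
  next
    fix p assume "p \<in> \<Union>(?A ` D)" then show "p \<in> ?P" by auto
  qed
  have "card ?P = (\<Sum>C\<in>D. card (?A C))"
    unfolding U
  proof (rule card_UN_disjoint)
    show "finite D" by (rule finD)
    show "\<forall>C\<in>D. finite (?A C)" using blk by (auto intro: finite_subset)
    show "\<forall>C1\<in>D. \<forall>C2\<in>D. C1 \<noteq> C2 \<longrightarrow> ?A C1 \<inter> ?A C2 = {}"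
    proof (intro ballI impI)
      fix C1 C2 assume C: "C1 \<in> D" "C2 \<in> D" "C1 \<noteq> C2"
      show "?A C1 \<inter> ?A C2 = {}"
      proof (rule ccontr)
        assume "?A C1 \<inter> ?A C2 \<noteq> {}"
        then obtain x y where xy: "x \<in> C1" "y \<in> C1" "x \<in> C2" "y \<in> C2" "x \<in> R 0" "y \<in> R 1" by auto
        then have "x < v" "y < v" "x \<noteq> y" unfolding R_def by auto
        then have "\<exists>!C. C \<in> D \<and> {x,y} \<subseteq> C" using pair by blast
        then show False using C xy by blast
      qed
    qed
  qed
  also have "\<dots> = (\<Sum>C\<in>D. card (C \<inter> R 0) * card (C \<inter> R 1))"
    by (simp add: card_cartesian_product)
  finally have eq: "n * n = (\<Sum>C\<in>D. card (C \<inter> R 0) * card (C \<inter> R 1))" using cP by simp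
  have "even (card (C \<inter> R 0) * card (C \<inter> R 1))" if C: "C \<in> D" for C
  proof -
    have Cs: "C \<subseteq> {..<v}" "card C = 3" "finite C" using blk[OF C] by (auto intro: finite_subset)
    have split: "C = (C \<inter> R 0) \<union> (C \<inter> R 1) \<union> (C \<inter> R 2)" using Cs(1) unfolding R_def by auto
    have "card C = card (C \<inter> R 0) + card (C \<inter> R 1) + card (C \<inter> R 2)"
      apply (subst split)
      apply (subst card_Un_disjoint)
      using Cs(3) apply (auto simp: R_def)[3]
      apply (subst card_Un_disjoint)
      using Cs(3) apply (auto simp: R_def)
      done
    then have s3: "card (C \<inter> R 0) + card (C \<inter> R 1) + card (C \<inter> R 2) = 3" using Cs by simp
    obtain x y where xy: "x \<in> C" "y \<in> C" "x \<noteq> y" "x mod 3 = y mod 3"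
      using no C unfolding inj_on_def by blast
    have "x mod 3 < 3" by simp
    then have r: "x mod 3 = 0 \<or> x mod 3 = 1 \<or> x mod 3 = 2" by linarith
    have ge2: "card (C \<inter> R (x mod 3)) \<ge> 2"
    proof -
      have "{x,y} \<subseteq> C \<inter> R (x mod 3)" using xy Cs(1) unfolding R_def by auto
      then have "card {x,y} \<le> card (C \<inter> R (x mod 3))" using Cs(3) by (intro card_mono) auto
      then show ?thesis using xy(3) by simp
    qed
    show ?thesis by (rule small_even[OF s3]) (use r ge2 in auto)
  qed
  then have "even (\<Sum>C\<in>D. card (C \<inter> R 0) * card (C \<inter> R 1))" by (intro dvd_sum) auto
  then have "even (n * n)" using eq by simp
  then show False using odd by simp
qed

end

context zsts begin
lemma case2:
  assumes v18: "v mod 18 = 9"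
  shows "\<exists>f. (\<forall>C\<in>D. f C \<in> {-2,-1,1,2::int}) \<and> (\<forall>x<v. (\<Sum>C\<in>{C\<in>D. x \<in> C}. f C) = 0)"
proof -
  define n where "n = v div 3"
  define m where "m = v div 18"
  have vm: "v = 18 * m + 9" using v18 unfolding m_def by (metis mod_mult_div_eq add.commute)
  then have nm: "n = 6 * m + 3" unfolding n_def by simp
  have vn: "v = 3 * n" and n3: "n mod 3 = 0" and odd: "odd n" and n0: "0 < n"
    using vm nm by simp_all
  obtain B where B: "B \<in> D" "inj_on (\<lambda>b. b mod 3) B" using exists_rainbow[OF vn odd] by blast
  have Bs: "B \<subseteq> {..<v}" "card B = 3" "finite B" using blk[OF B(1)] by (auto intro: finite_subset)
  have Bfull: "full B"
  proof -
    have "sh v n B \<noteq> B"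
    proof
      assume e: "sh v n B = B"
      obtain c where c: "c \<in> B" using Bs by fastforce
      have cv: "c < v" using c Bs by auto
      have d: "(c + n) mod v \<in> B" using e c unfolding sh_def by blast
      have "((c + n) mod v) mod 3 = (c + n) mod 3" using vn by (simp add: mod_mod_cancel)
      also have "\<dots> = c mod 3" using n3 by (metis mod_add_right_eq add_0_right)
      finally have r: "((c + n) mod v) mod 3 = c mod 3" .
      have "(c + n) mod v \<noteq> c" using add_n_ne[OF cv n0] vn n0 by simp
      then show False using B(2) c d r unfolding inj_on_def by blast
    qed
    then show ?thesis using full_iff3[OF vn B(1)] by simp
  qed
  define Sh where "Sh = {C\<in>D. sh v n C = C}"
  have Shfin: "finite {C\<in>Sh. x \<in> C}" for x using finD unfolding Sh_def by simp
  have Shle: "card {C\<in>Sh. x \<in> C} \<le> 1" if x: "x < v" for x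
  proof -
    have "C1 = C2" if C: "C1 \<in> {C\<in>Sh. x \<in> C}" "C2 \<in> {C\<in>Sh. x \<in> C}" for C1 C2
    proof -
      have "(x + n) mod v \<in> sh v n C1" "(x + n) mod v \<in> sh v n C2" using C unfolding sh_def by auto
      moreover have "sh v n C1 = C1" "sh v n C2 = C2" using C unfolding Sh_def by auto
      ultimately have y1: "(x + n) mod v \<in> C1" "(x + n) mod v \<in> C2" by simp_all
      have "(x + n) mod v \<noteq> x" "(x + n) mod v < v" using add_n_ne[OF x n0] x vn n0 by simp_all
      then show ?thesis using pair_uniq[OF x, of "(x + n) mod v" C1 C2] C y1 unfolding Sh_def by auto
    qed
    then show ?thesis using Shfin[of x] by (simp add: card_le_Suc0_iff_eq)
  qed
  have Shex: "({C\<in>Sh. x \<in> C} = {}) \<longleftrightarrow> ({C\<in>Sh. 0 \<in> C} = {})" if x: "x < v" for x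
  proof
    assume e: "{C\<in>Sh. x \<in> C} = {}"
    show "{C\<in>Sh. 0 \<in> C} = {}"
    proof (rule ccontr)
      assume "{C\<in>Sh. 0 \<in> C} \<noteq> {}"
      then obtain C where C: "C \<in> D" "sh v n C = C" "0 \<in> C" unfolding Sh_def by auto
      have "sh v x C \<in> D" using cyck C by auto
      moreover have "sh v n (sh v x C) = sh v x C" using C(2) sh_comm[of v n x C] by simp
      moreover have "x \<in> sh v x C" using C x unfolding sh_def by force
      ultimately show False using e unfolding Sh_def by auto
    qed
  next
    assume e: "{C\<in>Sh. 0 \<in> C} = {}"
    show "{C\<in>Sh. x \<in> C} = {}"
    proof (rule ccontr)
      assume "{C\<in>Sh. x \<in> C} \<noteq> {}"
      then obtain C where C: "C \<in> D" "sh v n C = C" "x \<in> C" unfolding Sh_def by auto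
      have "sh v (v - x) C \<in> D" using cyck C by auto
      moreover have "sh v n (sh v (v - x) C) = sh v (v - x) C" using C(2) sh_comm[of v n "v - x" C] by simp
      moreover have "0 \<in> sh v (v - x) C" using C x unfolding sh_def
        by (auto intro!: image_eqI[of _ _ x])
      ultimately show False using e unfolding Sh_def by auto
    qed
  qed
  define s0 where "s0 = card {C\<in>Sh. 0 \<in> C}"
  have s0le: "s0 \<le> 1" using Shle[of 0] vpos unfolding s0_def by simp
  have shx: "card {C\<in>Sh. x \<in> C} = s0" if x: "x < v" for x
  proof -
    have a: "card {C\<in>Sh. x \<in> C} \<le> 1" using Shle x by simp
    show ?thesis
    proof (cases "{C\<in>Sh. 0 \<in> C} = {}")
      case True
      then have e1: "{C\<in>Sh. x \<in> C} = {}" using Shex[OF x] by blast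
      show ?thesis unfolding s0_def e1 True by simp
    next
      case False
      then have "{C\<in>Sh. x \<in> C} \<noteq> {}" using Shex[OF x] by simp
      then have "card {C\<in>Sh. x \<in> C} \<noteq> 0" using Shfin by simp
      moreover have "s0 \<noteq> 0" using False Shfin unfolding s0_def by simp
      ultimately show ?thesis using a s0le by linarith
    qed
  qed
  define Rest where "Rest = {C\<in>D. sh v n C \<noteq> C} - orb v B"
  let ?O = "orb v ` Rest"
  have fO: "finite ?O" using finD unfolding Rest_def by simp
  obtain w :: "nat set set \<Rightarrow> int" where w: "\<forall>Q\<in>?O. w Q \<in> {-2,-1,1,2}"
    "(\<Sum>Q\<in>?O. w Q) = (if card ?O = 1 then 1 else 0)" using weights[OF fO] by blast
  define T :: int where "T = (if card ?O = 1 then 1 else 0)"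
  define G :: int where "G = int s0 - 3 * T"
  have G: "G = 1 \<or> G = 0 \<or> G = -2 \<or> G = -3" using s0le unfolding G_def T_def by auto
  define gl :: "int list" where "gl = (if G = 1 then [1,1,-1] else if G = 0 then [1,1,-2]
      else if G = -2 then [-1,-2,1] else [-1,-1,-1])"
  define g where "g i = gl ! i" for i
  have gv: "g i \<in> {-2,-1,1,2}" if "i < 3" for i
    using that G unfolding g_def gl_def by (auto simp: less_Suc_eq numeral_3_eq_3)
  have gs: "g 0 + g 1 + g 2 = G" using G unfolding g_def gl_def by auto
  define idx where "idx C = (THE k. k < v \<and> sh v k B = C)" for C
  have idx: "idx (sh v k B) = k" if "k < v" for k
    unfolding idx_def
  proof (rule the_equality)
    show "k < v \<and> sh v k B = sh v k B" using that by simp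
    fix j assume "j < v \<and> sh v j B = sh v k B"
    then show "j = k" using inj_orb[OF B(1) Bfull] that unfolding inj_on_def by auto
  qed
  define f where "f C = (if C \<in> orb v B then g (idx C mod 3) else if sh v n C = C then -1 else w (orb v C))" for C
  have f1: "f C = g (idx C mod 3)" if h: "C \<in> orb v B" for C
    unfolding f_def using h by (rule if_P)
  have f2: "f C = -1" if h1: "C \<notin> orb v B" and h2: "sh v n C = C" for C
  proof -
    have "f C = (if sh v n C = C then -1 else w (orb v C))" unfolding f_def using h1 by (rule if_not_P)
    also have "\<dots> = -1" using h2 by (rule if_P)
    finally show ?thesis .
  qed
  have f3: "f C = w (orb v C)" if h1: "C \<notin> orb v B" and h2: "sh v n C \<noteq> C" for C
  proof -
    have "f C = (if sh v n C = C then -1 else w (orb v C))" unfolding f_def using h1 by (rule if_not_P)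
    also have "\<dots> = w (orb v C)" using h2 by (rule if_not_P)
    finally show ?thesis .
  qed
  have fullSh: "sh v n C \<noteq> C" if "C \<in> orb v B" for C
    using full_orb[OF B(1) Bfull that] full_iff3[OF vn] orb_sub[OF B(1)] that by auto
  show ?thesis
  proof (intro exI[of _ f] conjI ballI allI impI)
    fix C assume C: "C \<in> D"
    show "f C \<in> {-2,-1,1,2}"
    proof (cases "C \<in> orb v B")
      case True then show ?thesis using gv[of "idx C mod 3"] f1[OF True] by simp
    next
      case False
      show ?thesis
      proof (cases "sh v n C = C")
        case True then show ?thesis using f2[OF False True] by simp
      next
        case F2: False
        then have "C \<in> Rest" using C False unfolding Rest_def by auto
        then show ?thesis using w(1) f3[OF False F2] by auto
      qed
    qed
  next
    fix x assume x: "x < v"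
    let ?S1 = "{C\<in>orb v B. x \<in> C}"
    let ?S2 = "{C\<in>Sh. x \<in> C}"
    let ?S3 = "{C\<in>Rest. x \<in> C}"
    have fob: "finite (orb v B)" using orb_eq[OF vpos, of B] by simp
    have fin: "finite ?S1" "finite ?S2" "finite ?S3"
      using finD fob unfolding Sh_def Rest_def by auto
    have split: "{C\<in>D. x \<in> C} = ?S1 \<union> ?S2 \<union> ?S3"
      using orb_sub[OF B(1)] unfolding Sh_def Rest_def by auto
    have d12: "?S1 \<inter> ?S2 = {}" using fullSh unfolding Sh_def by auto
    have d3: "(?S1 \<union> ?S2) \<inter> ?S3 = {}" unfolding Sh_def Rest_def by auto
    have sum_split: "sum f {C\<in>D. x \<in> C} = sum f ?S1 + sum f ?S2 + sum f ?S3"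
      unfolding split using fin d12 d3 by (simp add: sum.union_disjoint)
    have s1: "sum f ?S1 = G"
    proof -
      have "sum f ?S1 = (\<Sum>b\<in>B. f (sh v ((x + v - b) mod v) B))"
        by (rule count[OF B(1) Bfull x])
      also have "\<dots> = (\<Sum>b\<in>B. g ((x + v - b) mod 3))"
      proof (rule sum.cong[OF refl])
        fix b assume b: "b \<in> B"
        have kv: "(x + v - b) mod v < v" using vpos by simp
        have "sh v ((x + v - b) mod v) B \<in> orb v B" unfolding orb_def by simp
        then have "f (sh v ((x + v - b) mod v) B) = g (((x + v - b) mod v) mod 3)"
          using f1 idx[OF kv] by simp
        also have "((x + v - b) mod v) mod 3 = (x + v - b) mod 3" using vn by (simp add: mod_mod_cancel)
        finally show "f (sh v ((x + v - b) mod v) B) = g ((x + v - b) mod 3)" .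
      qed
      also have "\<dots> = (\<Sum>i\<in>{..<3}. g i)"
      proof -
        let ?h = "\<lambda>b. (x + v - b) mod 3"
        have hinj: "inj_on ?h B"
        proof (rule inj_onI)
          fix b1 b2 assume b: "b1 \<in> B" "b2 \<in> B" "?h b1 = ?h b2"
          have "b1 < v" "b2 < v" using b Bs by auto
          then have "b1 mod 3 = b2 mod 3" using b(3) modcanc[of "x + v - b1" b1 "x + v - b2" b2] by simp
          then show "b1 = b2" using B(2) b unfolding inj_on_def by blast
        qed
        have "?h ` B \<subseteq> {..<3}" by auto
        moreover have "card (?h ` B) = card {..<3::nat}" using card_image[OF hinj] Bs by simp
        ultimately have im: "?h ` B = {..<3}" by (intro card_subset_eq) auto
        show ?thesis using sum.reindex[OF hinj, of g] unfolding im comp_def by simp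
      qed
      also have "\<dots> = g 0 + g 1 + g 2" by (simp add: numeral_3_eq_3 numeral_2_eq_2)
      finally show ?thesis using gs by simp
    qed
    have s2: "sum f ?S2 = - int s0"
    proof -
      have fS2: "f C = -1" if C: "C \<in> ?S2" for C
      proof -
        have e: "sh v n C = C" using C unfolding Sh_def by simp
        have "C \<notin> orb v B"
        proof
          assume "C \<in> orb v B"
          then show False using fullSh[of C] e by simp
        qed
        then show ?thesis using f2 e by simp
      qed
      have "sum f ?S2 = sum (\<lambda>_. -1) ?S2" using fS2 by (rule sum.cong[OF refl])
      then show ?thesis using shx[OF x] by simp
    qed
    have s3: "sum f ?S3 = 3 * T"
    proof -
      have fS3: "f C = w (orb v C)" if C: "C \<in> ?S3" for C
      proof -
        have "sh v n C \<noteq> C" "C \<notin> orb v B" using C unfolding Rest_def by simp_all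
        then show ?thesis using f3 by simp
      qed
      have "sum f ?S3 = (\<Sum>C\<in>?S3. w (orb v C))" using fS3 by (rule sum.cong[OF refl])
      also have "\<dots> = 3 * (\<Sum>Q\<in>?O. w Q)"
      proof (rule orbits_sum[OF _ _ _ x])
        show "Rest \<subseteq> D" unfolding Rest_def by auto
      next
        fix C assume C: "C \<in> Rest"
        then have CD: "C \<in> D" and Cn: "sh v n C \<noteq> C" and CB: "C \<notin> orb v B" unfolding Rest_def by auto
        have Cf: "full C" using full_iff3[OF vn CD] Cn by simp
        show "full C" by (rule Cf)
        show "orb v C \<subseteq> Rest"
        proof
          fix E assume E: "E \<in> orb v C"
          have ED: "E \<in> D" using orb_sub[OF CD] E by auto
          have "full E" by (rule full_orb[OF CD Cf E])
          then have "sh v n E \<noteq> E" using full_iff3[OF vn ED] by simp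
          moreover have "E \<notin> orb v B"
          proof
            assume EB: "E \<in> orb v B"
            have "orb v E = orb v C" using orb_mem[OF _ E vpos] blk[OF CD] by auto
            moreover have "orb v E = orb v B" using orb_mem[OF _ EB vpos] blk[OF B(1)] by auto
            ultimately have "C \<in> orb v B" using orb_self[of C v] blk[OF CD] by auto
            then show False using CB by simp
          qed
          ultimately show "E \<in> Rest" using ED unfolding Rest_def by auto
        qed
      qed
      finally show ?thesis using w(2) unfolding T_def by simp
    qed
    show "sum f {C\<in>D. x \<in> C} = 0" using sum_split s1 s2 s3 unfolding G_def by simp
  qed
qed

end

theorem mainTheorem5:
  fixes X :: "'a set" and Bs :: "'a set set"
  assumes "STS X Bs"
    and "cyclic_design X Bs"
    and "card X \<noteq> 7"
    and "card X mod 6 = 1 \<or> card X mod 18 = 9"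
  shows "\<exists>f. zero_sum_flow 3 X Bs f"
proof -
  define v where "v = card X"
  have finX: "finite X" and Bsb: "\<And>B. B \<in> Bs \<Longrightarrow> B \<subseteq> X \<and> card B = 3"
    and Bsp: "\<And>x y. x \<in> X \<Longrightarrow> y \<in> X \<Longrightarrow> x \<noteq> y \<Longrightarrow> \<exists>!B. B \<in> Bs \<and> {x, y} \<subseteq> B"
  proof -
    have S: "finite X \<and> (\<forall>B\<in>Bs. B \<subseteq> X \<and> card B = 3) \<and>
      (\<forall>x\<in>X. \<forall>y\<in>X. x \<noteq> y \<longrightarrow> (\<exists>!B. B \<in> Bs \<and> {x, y} \<subseteq> B))"
      using assms(1) unfolding STS_def .
    show "finite X" using S[THEN conjunct1] .
    show "\<And>B. B \<in> Bs \<Longrightarrow> B \<subseteq> X \<and> card B = 3" using S[THEN conjunct2, THEN conjunct1] by (rule bspec)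
    show "\<And>x y. x \<in> X \<Longrightarrow> y \<in> X \<Longrightarrow> x \<noteq> y \<Longrightarrow> \<exists>!B. B \<in> Bs \<and> {x, y} \<subseteq> B"
      by (rule S[THEN conjunct2, THEN conjunct2, rule_format])
  qed
  have ex: "\<exists>\<phi> :: 'a \<Rightarrow> nat. bij_betw \<phi> X {0..<v} \<and>
        (\<forall>B\<in>Bs. (\<lambda>i. (i + 1) mod v) ` (\<phi> ` B) \<in> (\<lambda>C. \<phi> ` C) ` Bs)"
    using assms(2) unfolding cyclic_design_def v_def .
  from ex obtain \<phi> :: "'a \<Rightarrow> nat" where P: "bij_betw \<phi> X {0..<v} \<and>
        (\<forall>B\<in>Bs. (\<lambda>i. (i + 1) mod v) ` (\<phi> ` B) \<in> (\<lambda>C. \<phi> ` C) ` Bs)"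
    by (rule exE)
  have bij: "bij_betw \<phi> X {0..<v}" using P by (rule conjunct1)
  have cy: "\<And>B. B \<in> Bs \<Longrightarrow> (\<lambda>i. (i + 1) mod v) ` (\<phi> ` B) \<in> (\<lambda>C. \<phi> ` C) ` Bs"
    using P[THEN conjunct2] by (rule bspec)
  have inj: "inj_on \<phi> X" and img: "\<phi> ` X = {0..<v}" using bij by (auto simp: bij_betw_def)
  define D where "D = (\<lambda>C. \<phi> ` C) ` Bs"
  have vpos: "0 < v" using assms(4) unfolding v_def by auto
  interpret zsts v D
  proof
    show "0 < v" by (rule vpos)
  next
    fix C assume "C \<in> D"
    then obtain B where B: "B \<in> Bs" "C = \<phi> ` B" unfolding D_def by auto
    have "C \<subseteq> \<phi> ` X" using B Bsb[OF B(1)] by auto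
    then have "C \<subseteq> {..<v}" using img by auto
    moreover have "card C = 3" using B Bsb[OF B(1)] card_image[OF inj_on_subset[OF inj]] by auto
    ultimately show "C \<subseteq> {..<v} \<and> card C = 3" by simp
  next
    fix x y assume xy: "x < v" "y < v" "x \<noteq> y"
    obtain a where a: "a \<in> X" "\<phi> a = x" using img xy(1) by (metis atLeastLessThan_iff imageE zero_le)
    obtain b where b: "b \<in> X" "\<phi> b = y" using img xy(2) by (metis atLeastLessThan_iff imageE zero_le)
    have ab: "a \<noteq> b" using a b xy(3) by auto
    obtain B where B: "B \<in> Bs" "{a,b} \<subseteq> B" using ex1_implies_ex[OF Bsp[OF a(1) b(1) ab]] by blast
    show "\<exists>!C. C \<in> D \<and> {x, y} \<subseteq> C"
    proof (rule ex1I[of _ "\<phi> ` B"])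
      show "\<phi> ` B \<in> D \<and> {x, y} \<subseteq> \<phi> ` B" using B a b unfolding D_def by auto
    next
      fix C assume C: "C \<in> D \<and> {x, y} \<subseteq> C"
      then obtain B' where B': "B' \<in> Bs" "C = \<phi> ` B'" unfolding D_def by auto
      have B'X: "B' \<subseteq> X" using Bsb[OF B'(1)] by simp
      have "a \<in> B'"
      proof -
        obtain a' where "a' \<in> B'" "\<phi> a' = x" using C B' by auto
        then show ?thesis using a B'X inj unfolding inj_on_def by auto
      qed
      moreover have "b \<in> B'"
      proof -
        obtain b' where "b' \<in> B'" "\<phi> b' = y" using C B' by auto
        then show ?thesis using b B'X inj unfolding inj_on_def by auto
      qed
      ultimately have "{a,b} \<subseteq> B'" by simp
      then have "B' = B" using Bsp[OF a(1) b(1) ab] B B'(1) by blast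
      then show "C = \<phi> ` B" using B' by simp
    qed
  next
    fix C assume "C \<in> D"
    then obtain B where B: "B \<in> Bs" "C = \<phi> ` B" unfolding D_def by auto
    show "sh v 1 C \<in> D" using cy[OF B(1)] B unfolding sh_def D_def by simp
  qed
  obtain f' where f': "\<forall>C\<in>D. f' C \<in> {-2,-1,1,2::int}" "\<forall>x<v. (\<Sum>C\<in>{C\<in>D. x \<in> C}. f' C) = 0"
  proof -
    have "card X mod 6 = 1 \<and> card X \<noteq> 7 \<or> card X mod 18 = 9" using assms(3,4) by auto
    then have "\<exists>f'. (\<forall>C\<in>D. f' C \<in> {-2,-1,1,2::int}) \<and> (\<forall>x<v. (\<Sum>C\<in>{C\<in>D. x \<in> C}. f' C) = 0)"
    proof
      assume "card X mod 6 = 1 \<and> card X \<noteq> 7"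
      then show ?thesis using case1 unfolding v_def by simp
    next
      assume "card X mod 18 = 9"
      then show ?thesis using case2 unfolding v_def by simp
    qed
    then show ?thesis using that by blast
  qed
  define f where "f B = f' (\<phi> ` B)" for B
  have injB: "inj_on (\<lambda>C. \<phi> ` C) Bs"
    using inj_on_image_eq_iff[OF inj] Bsb unfolding inj_on_def by blast
  show ?thesis
  proof (intro exI[of _ f])
    show "zero_sum_flow 3 X Bs f" unfolding zero_sum_flow_def
    proof (intro conjI ballI)
      fix B assume "B \<in> Bs"
      then have "f B \<in> {-2,-1,1,2}" using f'(1) unfolding f_def D_def by auto
      then show "f B \<noteq> 0" "\<bar>f B\<bar> \<le> int 3 - 1" by auto
    next
      fix a assume a: "a \<in> X"
      have e: "(\<lambda>C. \<phi> ` C) ` {B\<in>Bs. a \<in> B} = {C\<in>D. \<phi> a \<in> C}"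
      proof (intro set_eqI iffI)
        fix C assume "C \<in> (\<lambda>C. \<phi> ` C) ` {B\<in>Bs. a \<in> B}"
        then show "C \<in> {C\<in>D. \<phi> a \<in> C}" unfolding D_def by auto
      next
        fix C assume "C \<in> {C\<in>D. \<phi> a \<in> C}"
        then obtain B where B: "B \<in> Bs" "C = \<phi> ` B" "\<phi> a \<in> \<phi> ` B" unfolding D_def by auto
        have "a \<in> B" using B(3) a Bsb[OF B(1)] inj unfolding inj_on_def by auto
        then show "C \<in> (\<lambda>C. \<phi> ` C) ` {B\<in>Bs. a \<in> B}" using B by auto
      qed
      have "(\<Sum>B\<in>{B\<in>Bs. a \<in> B}. f B) = (\<Sum>C\<in>(\<lambda>C. \<phi> ` C) ` {B\<in>Bs. a \<in> B}. f' C)"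
        unfolding f_def by (rule sum.reindex[OF inj_on_subset[OF injB], unfolded comp_def, symmetric]) auto
      also have "\<dots> = 0"
      proof -
        have "\<phi> a \<in> \<phi> ` X" using a by simp
        then have "\<phi> a < v" using img by simp
        then show ?thesis unfolding e using f'(2) by blast
      qed
      finally show "(\<Sum>B\<in>{B\<in>Bs. a \<in> B}. f B) = 0" .
    qed
  qed
qed


end
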